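(* Let $k_+,k_-,t$ be integers with $0\leq k_-\leq k_+$, $k_++k_-\geq 1$ and $t>0$, and let $M\triangleq[-k_-,k_+]^*$. For every real $0<\epsilon<1/t$ there is a number $\lambda$, depending only on $t$ and $\epsilon$ (and not on $N$), such that for every sufficiently large integer $N$ with $\gcd(N,k_+!)=1$, setting $G\triangleq\mathbb{Z}_N$, there exists a subset $S=\{s_1,s_2,\dots, s_n\}\subseteq G$ with $\frac{1}{2}N^{1/t-\epsilon}\leq n \leq \frac{3}{2}N^{1/t-\epsilon}$ such that $G \overset{\lambda}{\geq} M \diamond_t S$.
   Context: $[a,b]^*=\{a,a+1,\dots,b\}\setminus\{0\}$. For a finite Abelian group $G$, a finite set $M\subseteq\mathbb{Z}\setminus\{0\}$ and $S=\{s_1,\dots,s_n\}\subseteq G$, we write $G \overset{\lambda}{\geq} M\diamond_t S$ if every element $g\in G$ can be written in at most $\lambda$ ways as a linear combination of at most $t$ elements of $S$ with coefficients from $M\cup\{0\}$, i.e., the number of vectors $\mathbf{e}\in(M\cup\{0\})^n$ with Hamming weight at most $t$ and $\sum_i e_is_i=g$ is at most $\lambda$. *)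

theory Defs
  imports Complex_Main
begin

definition punct_interval :: "int \<Rightarrow> int \<Rightarrow> int set" where
  "punct_interval a b = {a..b} - {0}"

text \<open>The group Z_N is represented by the residues {0,...,N-1} (as integers) with
  arithmetic mod N.\<close>
definition reps :: "nat \<Rightarrow> int set \<Rightarrow> nat \<Rightarrow> int set \<Rightarrow> int \<Rightarrow> (int \<Rightarrow> int) set" where
  "reps N M t S g =
     {e. (\<forall>s. s \<notin> S \<longrightarrow> e s = 0) \<and> (\<forall>s\<in>S. e s \<in> M \<union> {0})
         \<and> card {s\<in>S. e s \<noteq> 0} \<le> t
         \<and> (\<Sum>s\<in>S. e s * s) mod int N = g mod int N}"

definition lambda_packing :: "nat \<Rightarrow> nat \<Rightarrow> int set \<Rightarrow> nat \<Rightarrow> int set \<Rightarrow> bool" where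
  "lambda_packing N lam M t S \<longleftrightarrow> (\<forall>g\<in>{0..<int N}. card (reps N M t S g) \<le> lam)"

end

theory Submission imports Defs "HOL-Library.FuncSet" begin

definition sp :: "(int \<Rightarrow> int) \<Rightarrow> int set" where "sp e = {s. e s \<noteq> 0}"

definition FF :: "nat \<Rightarrow> int set \<Rightarrow> nat \<Rightarrow> (int \<Rightarrow> int) set" where
  "FF N V k = {e. (\<forall>s. s \<notin> {0..<int N} \<longrightarrow> e s = 0) \<and> (\<forall>s. e s \<in> V) \<and> card (sp e) \<le> k}"

definition sig :: "nat \<Rightarrow> (int \<Rightarrow> int) \<Rightarrow> int" where
  "sig N e = (\<Sum>s\<in>{0..<int N}. e s * s)"

lemma sp_sub: "e \<in> FF N V k \<Longrightarrow> sp e \<subseteq> {0..<int N}"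
  unfolding FF_def sp_def by auto

lemma sp_fin: "e \<in> FF N V k \<Longrightarrow> finite (sp e)"
  using sp_sub finite_subset finite_atLeastLessThan_int by metis

lemma FF_fin: assumes "finite V" shows "finite (FF N V k)"
proof -
  have "FF N V k \<subseteq> {f. \<forall>x. (x \<in> {0..<int N} \<longrightarrow> f x \<in> V) \<and> (x \<notin> {0..<int N} \<longrightarrow> f x = 0)}"
    unfolding FF_def by auto
  moreover have "finite {f. \<forall>x. (x \<in> {0..<int N} \<longrightarrow> f x \<in> V) \<and> (x \<notin> {0..<int N} \<longrightarrow> f x = (0::int))}"
    using finite_set_of_finite_funs[of "{0..<int N}" V 0] assms by simp
  ultimately show ?thesis using finite_subset by blast
qed

lemma FF_mono: "k \<le> k' \<Longrightarrow> FF N V k \<subseteq> FF N V k'"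
  unfolding FF_def by auto

lemma card_supported:
  assumes "finite A" "finite V"
  shows "card {e \<in> FF N V k. sp e \<subseteq> A} \<le> card V ^ card A"
proof -
  have "inj_on (\<lambda>e. restrict e A) {e \<in> FF N V k. sp e \<subseteq> A}"
  proof (rule inj_onI)
    fix e e' assume a: "e \<in> {e \<in> FF N V k. sp e \<subseteq> A}" "e' \<in> {e \<in> FF N V k. sp e \<subseteq> A}"
      "restrict e A = restrict e' A"
    show "e = e'"
    proof
      fix s show "e s = e' s"
      proof (cases "s \<in> A")
        case True then show ?thesis using a(3) by (metis restrict_apply')
      next
        case False
        then have "e s = 0" "e' s = 0" using a(1,2) unfolding sp_def by blast+
        then show ?thesis by simp
      qed
    qed
  qed
  moreover have "(\<lambda>e. restrict e A) ` {e \<in> FF N V k. sp e \<subseteq> A} \<subseteq> (\<Pi>\<^sub>E i\<in>A. V)"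
    unfolding FF_def by auto
  ultimately have "card {e \<in> FF N V k. sp e \<subseteq> A} \<le> card (\<Pi>\<^sub>E i\<in>A. V)"
    by (intro card_inj_on_le) (auto intro: finite_PiE assms)
  also have "\<dots> = card V ^ card A" using assms by (simp add: card_PiE)
  finally show ?thesis .
qed

lemma sig_upd:
  assumes "d \<in> {0..<int N}"
  shows "sig N (e(d := c)) = sig N e - e d * d + c * d"
proof -
  have f: "finite {0..<int N}" by simp
  have 1: "sig N (e(d := c)) = c * d + (\<Sum>s\<in>{0..<int N} - {d}. (e(d:=c)) s * s)"
    unfolding sig_def using sum.remove[OF f assms, of "\<lambda>s. (e(d:=c)) s * s"] by simp
  have 2: "(\<Sum>s\<in>{0..<int N} - {d}. (e(d:=c)) s * s) = (\<Sum>s\<in>{0..<int N} - {d}. e s * s)"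
    by (rule sum.cong) auto
  have 3: "sig N e = e d * d + (\<Sum>s\<in>{0..<int N} - {d}. e s * s)"
    unfolding sig_def using sum.remove[OF f assms, of "\<lambda>s. e s * s"] by simp
  show ?thesis using 1 2 3 by linarith
qed

lemma sum_triple:
  fixes f :: "'c \<Rightarrow> real"
  assumes "finite A" "finite B" "finite C"
  shows "(\<Sum>y\<in>A \<times> B \<times> C. f (snd (snd y))) = real (card A) * real (card B) * (\<Sum>z\<in>C. f z)"
proof -
  have "(\<Sum>y\<in>A \<times> B \<times> C. f (snd (snd y))) = (\<Sum>a\<in>A. \<Sum>y\<in>B \<times> C. f (snd y))"
    by (simp add: sum.cartesian_product')
  also have "\<dots> = (\<Sum>a\<in>A. \<Sum>b\<in>B. \<Sum>z\<in>C. f z)"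
    by (simp add: sum.cartesian_product')
  also have "\<dots> = real (card A) * real (card B) * (\<Sum>z\<in>C. f z)" by simp
  finally show ?thesis .
qed

lemma sp_upd0: "sp (e(d := 0)) = sp e - {d}"
  unfolding sp_def by auto

lemma FF_D:
  assumes "e \<in> FF N V k"
  shows "\<And>s. s \<notin> {0..<int N} \<Longrightarrow> e s = 0" "\<And>s. e s \<in> V" "card (sp e) \<le> k"
  using assms unfolding FF_def mem_Collect_eq by blast+

lemma FF_I:
  assumes "\<And>s. s \<notin> {0..<int N} \<Longrightarrow> e s = 0" "\<And>s. e s \<in> V" "card (sp e) \<le> k"
  shows "e \<in> FF N V k"
  using assms unfolding FF_def mem_Collect_eq by blast

lemma FF_upd0:
  assumes "e \<in> FF N V (Suc k)" "d \<in> sp e" "0 \<in> V"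
  shows "e(d := 0) \<in> FF N V k"
proof (rule FF_I)
  have fin: "finite (sp e)" by (rule sp_fin[OF assms(1)])
  have c: "card (sp e - {d}) = card (sp e) - 1" using assms(2) fin by simp
  have le: "card (sp e) \<le> Suc k" by (rule FF_D(3)[OF assms(1)])
  show "card (sp (e(d := 0))) \<le> k" unfolding sp_upd0 using c le by linarith
  show "(e(d := 0)) s = 0" if "s \<notin> {0..<int N}" for s using FF_D(1)[OF assms(1) that] by simp
  show "(e(d := 0)) s \<in> V" for s using FF_D(2)[OF assms(1)] assms(3) by simp
qed

lemma FF0_sp: "e \<in> FF N V 0 \<Longrightarrow> sp e = {}"
proof -
  assume a: "e \<in> FF N V 0"
  have "card (sp e) = 0" using FF_D(3)[OF a] by simp
  then show "sp e = {}" using sp_fin[OF a] by simp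
qed

lemma phi_step:
  fixes x :: real
  assumes V: "finite V" "0 \<in> V" and x: "x \<ge> 0" and W: "finite W" "W \<subseteq> {0..<int N}"
  shows "(\<Sum>e\<in>FF N V (Suc k). x ^ card (sp e - W))
     \<le> real (card V) ^ card W + real N * real (card V) * x * (\<Sum>e\<in>FF N V k. x ^ card (sp e - W))"
proof -
  define A where "A = {e\<in>FF N V (Suc k). sp e \<subseteq> W}"
  define B where "B = {e\<in>FF N V (Suc k). \<not> sp e \<subseteq> W}"
  have finF: "finite (FF N V j)" for j using FF_fin[OF V(1)] .
  have AB: "FF N V (Suc k) = A \<union> B" "A \<inter> B = {}" unfolding A_def B_def by auto
  have finA: "finite A" and finB: "finite B" using finF unfolding A_def B_def by auto
  have "(\<Sum>e\<in>FF N V (Suc k). x ^ card (sp e - W)) = (\<Sum>e\<in>A. x ^ card (sp e - W)) + (\<Sum>e\<in>B. x ^ card (sp e - W))"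
    using AB finA finB by (simp add: sum.union_disjoint)
  moreover have "(\<Sum>e\<in>A. x ^ card (sp e - W)) = (\<Sum>e\<in>A. 1)"
    by (rule sum.cong) (simp_all add: A_def Diff_eq_empty_iff[THEN iffD2])
  moreover have "(\<Sum>e\<in>A. (1::real)) = real (card A)" by simp
  moreover have "real (card A) \<le> real (card V) ^ card W"
  proof -
    have "card A \<le> card V ^ card W"
      using card_supported[OF W(1) V(1), of N "Suc k"] unfolding A_def .
    then show ?thesis by (metis of_nat_le_iff of_nat_power)
  qed
  moreover have "(\<Sum>e\<in>B. x ^ card (sp e - W)) \<le> real N * real (card V) * x * (\<Sum>e\<in>FF N V k. x ^ card (sp e - W))"
  proof -
    define dd where "dd e = Max (sp e - W)" for e
    define h where "h e = (dd e, e (dd e), e(dd e := 0))" for e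
    define g where "g = (\<lambda>y::int \<times> int \<times> (int \<Rightarrow> int). x * x ^ card (sp (snd (snd y)) - W))"
    have dd: "dd e \<in> sp e - W" "finite (sp e - W)" if "e \<in> B" for e
    proof -
      have "e \<in> FF N V (Suc k)" using that unfolding B_def by simp
      then have "finite (sp e - W)" using sp_fin by auto
      moreover have "sp e - W \<noteq> {}" using that unfolding B_def by auto
      ultimately show "dd e \<in> sp e - W" "finite (sp e - W)" unfolding dd_def using Max_in by auto
    qed
    have inj: "inj_on h B"
    proof (rule inj_onI)
      fix e1 e2 assume "e1 \<in> B" "e2 \<in> B" "h e1 = h e2"
      then have d: "dd e1 = dd e2" and c: "e1 (dd e1) = e2 (dd e2)" and z: "e1(dd e1 := 0) = e2(dd e2 := 0)"
        unfolding h_def by auto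
      show "e1 = e2"
      proof
        fix s show "e1 s = e2 s"
        proof (cases "s = dd e1")
          case True then show ?thesis using c d by simp
        next
          case False then show ?thesis using fun_cong[OF z, of s] d by simp
        qed
      qed
    qed
    have eq: "x ^ card (sp e - W) = g (h e)" if "e \<in> B" for e
    proof -
      have "sp e - W = insert (dd e) (sp (e(dd e := 0)) - W)" using dd[OF that] unfolding sp_upd0 by auto
      moreover have "dd e \<notin> sp (e(dd e := 0)) - W" unfolding sp_upd0 by auto
      moreover have "sp (e(dd e := 0)) - W = (sp e - W) - {dd e}" unfolding sp_upd0 by auto
      then have "finite (sp (e(dd e := 0)) - W)" using dd[OF that] by simp
      ultimately have "card (sp e - W) = Suc (card (sp (e(dd e := 0)) - W))" by simp
      then show ?thesis unfolding g_def h_def by simp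
    qed
    have sub: "h ` B \<subseteq> {0..<int N} \<times> V \<times> FF N V k"
    proof
      fix y assume "y \<in> h ` B"
      then obtain e where e: "e \<in> B" "y = h e" by auto
      have "e \<in> FF N V (Suc k)" using e(1) unfolding B_def by simp
      then have "sp e \<subseteq> {0..<int N}" by (rule sp_sub)
      then have "dd e \<in> {0..<int N}" using dd[OF e(1)] by blast
      moreover have "e (dd e) \<in> V" using e(1) unfolding B_def FF_def by auto
      moreover have "e(dd e := 0) \<in> FF N V k" using FF_upd0[of e N V k "dd e"] dd[OF e(1)] e(1) V(2)
        unfolding B_def by auto
      ultimately show "y \<in> {0..<int N} \<times> V \<times> FF N V k" using e(2) unfolding h_def by auto
    qed
    have g0: "g y \<ge> 0" for y using x unfolding g_def by simp
    have "(\<Sum>e\<in>B. x ^ card (sp e - W)) = (\<Sum>e\<in>B. g (h e))" using eq by simp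
    also have "\<dots> = (\<Sum>y\<in>h ` B. g y)" using sum.reindex[OF inj, of g] by simp
    also have "\<dots> \<le> (\<Sum>y\<in>{0..<int N} \<times> V \<times> FF N V k. g y)"
    proof -
      have fin3: "finite ({0..<int N} \<times> V \<times> FF N V k)" using finF V(1) by simp
      show ?thesis by (rule sum_mono2[OF fin3 sub]) (simp add: g0)
    qed
    also have "\<dots> = real (card {0..<int N}) * real (card V) * (\<Sum>e'\<in>FF N V k. x * x ^ card (sp e' - W))"
      unfolding g_def by (rule sum_triple) (auto simp: V(1) finF)
    also have "\<dots> = real N * real (card V) * x * (\<Sum>e\<in>FF N V k. x ^ card (sp e - W))"
      by (simp add: sum_distrib_left mult.assoc)
    finally show ?thesis .
  qed
  ultimately show ?thesis by linarith
qed

lemma phi_bound: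
  fixes x :: real
  assumes V: "finite V" "0 \<in> V" and x: "x \<ge> 0" and W: "finite W" "W \<subseteq> {0..<int N}"
  shows "(\<Sum>e\<in>FF N V k. x ^ card (sp e - W)) \<le> real (card V) ^ card W * (1 + real N * real (card V) * x) ^ k"
proof (induction k)
  case 0
  have "(\<Sum>e\<in>FF N V 0. x ^ card (sp e - W)) = (\<Sum>e\<in>FF N V 0. 1)"
    by (rule sum.cong) (auto simp: FF0_sp)
  moreover have "FF N V 0 = {e\<in>FF N V 0. sp e \<subseteq> W}" using FF0_sp by auto
  ultimately have "(\<Sum>e\<in>FF N V 0. x ^ card (sp e - W)) = real (card {e\<in>FF N V 0. sp e \<subseteq> W})"
    by simp
  also have "\<dots> \<le> real (card V ^ card W)" using card_supported[OF W(1) V(1), of N 0] by linarith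
  finally show ?case by simp
next
  case (Suc k)
  let ?y = "real N * real (card V) * x"
  have y: "?y \<ge> 0" using x by simp
  have cv: "real (card V) ^ card W \<ge> 0" by simp
  have "(\<Sum>e\<in>FF N V (Suc k). x ^ card (sp e - W)) \<le> real (card V) ^ card W + ?y * (\<Sum>e\<in>FF N V k. x ^ card (sp e - W))"
    by (rule phi_step[OF V x W])
  also have "\<dots> \<le> real (card V) ^ card W + ?y * (real (card V) ^ card W * (1 + ?y) ^ k)"
    using Suc.IH y by (simp add: mult_left_mono)
  also have "\<dots> \<le> real (card V) ^ card W * (1 + ?y) ^ Suc k"
  proof -
    have "1 \<le> (1 + ?y) ^ k" using y by simp
    then have "real (card V) ^ card W \<le> real (card V) ^ card W * (1 + ?y) ^ k"
      using cv by (simp add: mult_le_cancel_left1)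
    then show ?thesis by (simp add: algebra_simps)
  qed
  finally show ?case .
qed

lemma sol_card:
  fixes c h :: int and K N :: nat
  assumes c: "c \<noteq> 0" "\<bar>c\<bar> \<le> int K" and N: "N > 0"
  shows "card {d \<in> {0..<int N}. (c*d) mod int N = h mod int N} \<le> 2*K+2"
proof -
  define S where "S = {d \<in> {0..<int N}. (c*d) mod int N = h mod int N}"
  define hh where "hh = h mod int N"
  define q where "q d = (c*d - hh) div int N" for d
  have hh: "0 \<le> hh" "hh < int N" unfolding hh_def using N by auto
  have eqn: "c*d - hh = int N * q d" if "d \<in> S" for d
  proof -
    have "(c*d) mod int N = hh mod int N" using that unfolding S_def hh_def by simp
    then have "int N dvd c*d - hh" by (simp add: mod_eq_dvd_iff)
    then show ?thesis unfolding q_def by simp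
  qed
  have inj: "inj_on q S"
  proof (rule inj_onI)
    fix d1 d2 assume a: "d1 \<in> S" "d2 \<in> S" "q d1 = q d2"
    have "c*d1 - hh = c*d2 - hh" using eqn[OF a(1)] eqn[OF a(2)] a(3) by simp
    then have "c*d1 = c*d2" by simp
    then show "d1 = d2" using c(1) by simp
  qed
  have rng: "q ` S \<subseteq> {- int K - 1..int K}"
  proof
    fix y assume "y \<in> q ` S"
    then obtain d where d: "d \<in> S" "y = q d" by auto
    have d0: "0 \<le> d" "d < int N" using d(1) unfolding S_def by auto
    have "\<bar>c*d\<bar> = \<bar>c\<bar> * d" using d0 by (simp add: abs_mult)
    also have "\<dots> \<le> int K * int N" using c(2) d0 by (intro mult_mono) auto
    finally have cd: "\<bar>c*d\<bar> \<le> int K * int N" .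
    have e: "c*d - hh = int N * y" using eqn[OF d(1)] d(2) by simp
    have cd2: "c*d \<le> int N * int K" "- (int N * int K) \<le> c*d" using cd by (simp_all add: abs_le_iff mult.commute)
    have "int N * y \<le> int N * int K" using e cd2 hh by linarith
    then have up: "y \<le> int K" using N by simp
    have "int N * (- int K - 1) = - (int N * int K) - int N" by (simp add: algebra_simps)
    then have "int N * (- int K - 1) < int N * y" using e cd2 hh by linarith
    then have lo: "- int K - 1 < y" using N by (simp add: mult_less_cancel_left)
    show "y \<in> {- int K - 1..int K}" using up lo by simp
  qed
  have "card S = card (q ` S)" using inj by (simp add: card_image)
  also have "\<dots> \<le> card {- int K - 1..int K}" by (rule card_mono) (use rng in auto)
  also have "\<dots> = 2*K+2" by simp
  finally show ?thesis unfolding S_def .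
qed

definition Sol :: "nat \<Rightarrow> int \<Rightarrow> int \<Rightarrow> int set" where
  "Sol N c h = {d \<in> {0..<int N}. (c*d) mod int N = h mod int N}"

lemma Sol_fin: "finite (Sol N c h)" unfolding Sol_def by (rule finite_subset[of _ "{0..<int N}"]) auto

lemma sum_Sigma3:
  fixes w :: "'a \<Rightarrow> real"
  assumes "finite A" "finite C" "\<And>a c. finite (D a c)"
  shows "(\<Sum>y\<in>(SIGMA a:A. SIGMA c:C. D a c). w (fst y)) = (\<Sum>a\<in>A. \<Sum>c\<in>C. real (card (D a c)) * w a)"
proof -
  have fs: "finite (SIGMA c:C. D a c)" for a using assms by auto
  have "(\<Sum>a\<in>A. \<Sum>z\<in>(SIGMA c:C. D a c). w a) = (\<Sum>y\<in>(SIGMA a:A. SIGMA c:C. D a c). (\<lambda>(a,z). w a) y)"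
    by (rule sum.Sigma) (use assms fs in auto)
  also have "\<dots> = (\<Sum>y\<in>(SIGMA a:A. SIGMA c:C. D a c). w (fst y))" by (rule sum.cong) auto
  finally have 1: "(\<Sum>y\<in>(SIGMA a:A. SIGMA c:C. D a c). w (fst y)) = (\<Sum>a\<in>A. \<Sum>z\<in>(SIGMA c:C. D a c). w a)" by simp
  have 2: "(\<Sum>z\<in>(SIGMA c:C. D a c). w a) = (\<Sum>c\<in>C. real (card (D a c)) * w a)" for a
  proof -
    have "(\<Sum>c\<in>C. \<Sum>d\<in>D a c. w a) = (\<Sum>z\<in>(SIGMA c:C. D a c). (\<lambda>(c,d). w a) z)"
      by (rule sum.Sigma) (use assms in auto)
    then show ?thesis by (simp add: split_def)
  qed
  show ?thesis unfolding 1 using 2 by simp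
qed

lemma sig_cons:
  assumes "d \<in> {0..<int N}" "e d = 0"
  shows "sig N (e(d := c)) = sig N e + c * d"
  using sig_upd[OF assms(1), of e c] assms(2) by simp

lemma psi_bound:
  fixes x :: real
  assumes V: "finite V" "0 \<in> V" "\<forall>v\<in>V. \<bar>v\<bar> \<le> int K" and x: "x \<ge> 0"
    and W: "finite W" "W \<subseteq> {0..<int N}" and N: "N > 0"
  shows "(\<Sum>e\<in>{e\<in>FF N V (Suc k). sig N e mod int N = g mod int N \<and> \<not> sp e \<subseteq> W}. x ^ card (sp e - W))
     \<le> real (2*K+2) * real (card V) * x * (\<Sum>e\<in>FF N V k. x ^ card (sp e - W))"
proof -
  define B where "B = {e\<in>FF N V (Suc k). sig N e mod int N = g mod int N \<and> \<not> sp e \<subseteq> W}"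
  have finF: "finite (FF N V j)" for j using FF_fin[OF V(1)] .
  have finB: "finite B" using finF unfolding B_def by auto
  define dd where "dd e = Max (sp e - W)" for e
  define h where "h e = (e(dd e := 0), e (dd e), dd e)" for e
  define wt where "wt = (\<lambda>y::(int \<Rightarrow> int) \<times> int \<times> int. x * x ^ card (sp (fst y) - W))"
  define T where "T = (SIGMA e':FF N V k. SIGMA c:V-{0}. Sol N c (g - sig N e'))"
  have BF: "e \<in> FF N V (Suc k)" if "e \<in> B" for e using that unfolding B_def by simp
  have dd: "dd e \<in> sp e - W" "finite (sp e - W)" if "e \<in> B" for e
  proof -
    have "finite (sp e - W)" using sp_fin[OF BF[OF that]] by auto
    moreover have "sp e - W \<noteq> {}" using that unfolding B_def by auto
    ultimately show "dd e \<in> sp e - W" "finite (sp e - W)" unfolding dd_def using Max_in by auto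
  qed
  have inj: "inj_on h B"
  proof (rule inj_onI)
    fix e1 e2 assume "e1 \<in> B" "e2 \<in> B" "h e1 = h e2"
    then have d: "dd e1 = dd e2" and c: "e1 (dd e1) = e2 (dd e2)" and z: "e1(dd e1 := 0) = e2(dd e2 := 0)"
      unfolding h_def by auto
    show "e1 = e2"
    proof
      fix s show "e1 s = e2 s"
      proof (cases "s = dd e1")
        case True then show ?thesis using c d by simp
      next
        case False then show ?thesis using fun_cong[OF z, of s] d by simp
      qed
    qed
  qed
  have eq: "x ^ card (sp e - W) = wt (h e)" if "e \<in> B" for e
  proof -
    have "sp e - W = insert (dd e) (sp (e(dd e := 0)) - W)" using dd[OF that] unfolding sp_upd0 by auto
    moreover have "dd e \<notin> sp (e(dd e := 0)) - W" unfolding sp_upd0 by auto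
    moreover have "sp (e(dd e := 0)) - W = (sp e - W) - {dd e}" unfolding sp_upd0 by auto
    then have "finite (sp (e(dd e := 0)) - W)" using dd[OF that] by simp
    ultimately have "card (sp e - W) = Suc (card (sp (e(dd e := 0)) - W))" by simp
    then show ?thesis unfolding wt_def h_def by simp
  qed
  have sub: "h ` B \<subseteq> T"
  proof
    fix y assume "y \<in> h ` B"
    then obtain e where e: "e \<in> B" "y = h e" by auto
    define d where "d = dd e"
    define e' where "e' = e(d := 0)"
    have eF: "e \<in> FF N V (Suc k)" by (rule BF[OF e(1)])
    have dsp: "d \<in> sp e" using dd[OF e(1)] unfolding d_def by simp
    have "sp e \<subseteq> {0..<int N}" by (rule sp_sub[OF eF])
    then have dG: "d \<in> {0..<int N}" using dsp by blast
    have cV: "e d \<in> V - {0}" using FF_D(2)[OF eF] dsp unfolding sp_def by auto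
    have e'F: "e' \<in> FF N V k" unfolding e'_def by (rule FF_upd0[OF eF dsp V(2)])
    have "e = e'(d := e d)" unfolding e'_def by simp
    then have "sig N e = sig N e' + e d * d" using sig_cons[OF dG, of e' "e d"] unfolding e'_def by simp
    then have "e d * d = sig N e - sig N e'" by simp
    moreover have "sig N e mod int N = g mod int N" using e(1) unfolding B_def by simp
    ultimately have "(e d * d) mod int N = (g - sig N e') mod int N" by (metis mod_diff_cong)
    then have "d \<in> Sol N (e d) (g - sig N e')" unfolding Sol_def using dG by simp
    then show "y \<in> T" unfolding T_def e(2) h_def using e'F cV unfolding d_def e'_def by auto
  qed
  have finT: "finite T" unfolding T_def using finF V(1) Sol_fin by auto
  have wt0: "wt y \<ge> 0" for y using x unfolding wt_def by simp
  have "(\<Sum>e\<in>B. x ^ card (sp e - W)) = (\<Sum>e\<in>B. wt (h e))" using eq by simp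
  also have "\<dots> = (\<Sum>y\<in>h ` B. wt y)" using sum.reindex[OF inj, of wt] by simp
  also have "\<dots> \<le> (\<Sum>y\<in>T. wt y)" by (rule sum_mono2[OF finT sub]) (simp add: wt0)
  also have "\<dots> = (\<Sum>e'\<in>FF N V k. \<Sum>c\<in>V-{0}. real (card (Sol N c (g - sig N e'))) * (x * x ^ card (sp e' - W)))"
    unfolding T_def wt_def by (rule sum_Sigma3) (use finF V(1) Sol_fin in auto)
  also have "\<dots> \<le> (\<Sum>e'\<in>FF N V k. \<Sum>c\<in>V. real (2*K+2) * (x * x ^ card (sp e' - W)))"
  proof (rule sum_mono)
    fix e' assume "e' \<in> FF N V k"
    have "(\<Sum>c\<in>V-{0}. real (card (Sol N c (g - sig N e'))) * (x * x ^ card (sp e' - W)))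
        \<le> (\<Sum>c\<in>V-{0}. real (2*K+2) * (x * x ^ card (sp e' - W)))"
    proof (rule sum_mono)
      fix c assume c: "c \<in> V - {0}"
      have "card (Sol N c (g - sig N e')) \<le> 2*K+2" unfolding Sol_def
        by (rule sol_card) (use c V(3) N in auto)
      then have "real (card (Sol N c (g - sig N e'))) \<le> real (2*K+2)" by linarith
      then show "real (card (Sol N c (g - sig N e'))) * (x * x ^ card (sp e' - W)) \<le> real (2*K+2) * (x * x ^ card (sp e' - W))"
        using x by (simp add: mult_right_mono)
    qed
    also have "\<dots> \<le> (\<Sum>c\<in>V. real (2*K+2) * (x * x ^ card (sp e' - W)))"
      by (rule sum_mono2) (use V(1) x in auto)
    finally show "(\<Sum>c\<in>V-{0}. real (card (Sol N c (g - sig N e'))) * (x * x ^ card (sp e' - W)))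
        \<le> (\<Sum>c\<in>V. real (2*K+2) * (x * x ^ card (sp e' - W)))" .
  qed
  also have "\<dots> = real (2*K+2) * real (card V) * x * (\<Sum>e\<in>FF N V k. x ^ card (sp e - W))"
    by (simp add: sum_distrib_left mult.assoc mult.left_commute)
  finally show ?thesis unfolding B_def .
qed

lemma sum_Sigma3':
  fixes w :: "'a \<Rightarrow> real"
  assumes "finite A" "\<And>a. finite (C a)" "\<And>a c. finite (D a c)"
  shows "(\<Sum>y\<in>(SIGMA a:A. SIGMA c:C a. D a c). w (fst y)) = (\<Sum>a\<in>A. \<Sum>c\<in>C a. real (card (D a c)) * w a)"
proof -
  have fs: "finite (SIGMA c:C a. D a c)" for a using assms by auto
  have "(\<Sum>a\<in>A. \<Sum>z\<in>(SIGMA c:C a. D a c). w a) = (\<Sum>y\<in>(SIGMA a:A. SIGMA c:C a. D a c). (\<lambda>(a,z). w a) y)"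
    by (rule sum.Sigma) (use assms fs in auto)
  also have "\<dots> = (\<Sum>y\<in>(SIGMA a:A. SIGMA c:C a. D a c). w (fst y))" by (rule sum.cong) auto
  finally have 1: "(\<Sum>y\<in>(SIGMA a:A. SIGMA c:C a. D a c). w (fst y)) = (\<Sum>a\<in>A. \<Sum>z\<in>(SIGMA c:C a. D a c). w a)" by simp
  have 2: "(\<Sum>z\<in>(SIGMA c:C a. D a c). w a) = (\<Sum>c\<in>C a. real (card (D a c)) * w a)" for a
  proof -
    have "(\<Sum>c\<in>C a. \<Sum>d\<in>D a c. w a) = (\<Sum>z\<in>(SIGMA c:C a. D a c). (\<lambda>(c,d). w a) z)"
      by (rule sum.Sigma) (use assms in auto)
    then show ?thesis by (simp add: split_def)
  qed
  show ?thesis unfolding 1 using 2 by simp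
qed

definition PP :: "nat \<Rightarrow> int set \<Rightarrow> nat \<Rightarrow> ((int \<Rightarrow> int) \<times> (int \<Rightarrow> int)) set" where
  "PP N V k = {(e,e'). e \<in> FF N V k \<and> e' \<in> FF N V k \<and> e \<noteq> e' \<and> sp e = sp e' \<and> sig N e mod int N = sig N e' mod int N}"

lemma pair_bound:
  fixes x :: real
  assumes V: "finite V" "0 \<in> V" "\<forall>v\<in>V. \<bar>v\<bar> \<le> int K" and x: "x \<ge> 0" and N: "N > 0"
  shows "(\<Sum>p\<in>PP N V (Suc k). x ^ card (sp (fst p)))
     \<le> real (4*K+2) * real (card V) ^ k * real (card V) ^ 2 * x * (\<Sum>e\<in>FF N V k. x ^ card (sp e))"
proof -
  define B where "B = PP N V (Suc k)"
  have finF: "finite (FF N V j)" for j using FF_fin[OF V(1)] .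
  have finB: "finite B" unfolding B_def PP_def
    by (rule finite_subset[of _ "FF N V (Suc k) \<times> FF N V (Suc k)"]) (use finF in auto)
  define dd where "dd p = Max {s. fst p s \<noteq> snd p s}" for p :: "(int \<Rightarrow> int) \<times> (int \<Rightarrow> int)"
  define h where "h p = ((fst p)(dd p := 0), ((snd p)(dd p := 0), fst p (dd p), snd p (dd p)), dd p)" for p
  define wt where "wt = (\<lambda>y::(int \<Rightarrow> int) \<times> ((int \<Rightarrow> int) \<times> int \<times> int) \<times> int. x * x ^ card (sp (fst y)))"
  define C where "C e0 = {f \<in> FF N V k. sp f \<subseteq> sp e0} \<times> {(c,c'). c \<in> V \<and> c' \<in> V \<and> c \<noteq> c'}" for e0
  define D where "D e0 z = Sol N (fst (snd z) - snd (snd z)) (sig N (fst z) - sig N e0)" for e0 z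
  define T where "T = (SIGMA e0:FF N V k. SIGMA z:C e0. D e0 z)"
  have BF: "fst p \<in> FF N V (Suc k)" "snd p \<in> FF N V (Suc k)" "fst p \<noteq> snd p" "sp (fst p) = sp (snd p)"
     "sig N (fst p) mod int N = sig N (snd p) mod int N" if "p \<in> B" for p
    using that unfolding B_def PP_def by auto
  have dd: "dd p \<in> sp (fst p)" "fst p (dd p) \<noteq> snd p (dd p)" if "p \<in> B" for p
  proof -
    have "{s. fst p s \<noteq> snd p s} \<subseteq> sp (fst p) \<union> sp (snd p)" unfolding sp_def by auto
    then have "finite {s. fst p s \<noteq> snd p s}" using sp_fin[OF BF(1)[OF that]] sp_fin[OF BF(2)[OF that]]
      by (meson finite_UnI finite_subset)
    moreover have "{s. fst p s \<noteq> snd p s} \<noteq> {}" using BF(3)[OF that] by auto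
    ultimately have "dd p \<in> {s. fst p s \<noteq> snd p s}" unfolding dd_def using Max_in by blast
    then have "fst p (dd p) \<noteq> snd p (dd p)" by simp
    then show "fst p (dd p) \<noteq> snd p (dd p)" .
    then have "dd p \<in> sp (fst p) \<union> sp (snd p)" unfolding sp_def by auto
    then show "dd p \<in> sp (fst p)" using BF(4)[OF that] by simp
  qed
  have inj: "inj_on h B"
  proof (rule inj_onI)
    fix p1 p2 assume a: "p1 \<in> B" "p2 \<in> B" "h p1 = h p2"
    then have d: "dd p1 = dd p2" and c: "fst p1 (dd p1) = fst p2 (dd p2)" "snd p1 (dd p1) = snd p2 (dd p2)"
      and z: "(fst p1)(dd p1 := 0) = (fst p2)(dd p2 := 0)" "(snd p1)(dd p1 := 0) = (snd p2)(dd p2 := 0)"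
      unfolding h_def by auto
    have "fst p1 = fst p2"
    proof
      fix s show "fst p1 s = fst p2 s"
      proof (cases "s = dd p1")
        case True then show ?thesis using c d by simp
      next
        case False then show ?thesis using fun_cong[OF z(1), of s] d by simp
      qed
    qed
    moreover have "snd p1 = snd p2"
    proof
      fix s show "snd p1 s = snd p2 s"
      proof (cases "s = dd p1")
        case True then show ?thesis using c d by simp
      next
        case False then show ?thesis using fun_cong[OF z(2), of s] d by simp
      qed
    qed
    ultimately show "p1 = p2" by (simp add: prod_eq_iff)
  qed
  have eq: "x ^ card (sp (fst p)) = wt (h p)" if "p \<in> B" for p
  proof -
    have f: "finite (sp (fst p))" using sp_fin[OF BF(1)[OF that]] .
    have "Suc (card (sp (fst p) - {dd p})) = card (sp (fst p))" by (rule card_Suc_Diff1[OF f dd(1)[OF that]])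
    then have "card (sp (fst p)) = Suc (card (sp (fst p) - {dd p}))" by simp
    then show ?thesis unfolding wt_def h_def by (simp add: sp_upd0)
  qed
  have sub: "h ` B \<subseteq> T"
  proof
    fix y assume "y \<in> h ` B"
    then obtain p where p: "p \<in> B" "y = h p" by auto
    obtain e e' where ee: "p = (e, e')" by (cases p)
    define d where "d = dd p"
    have eF: "e \<in> FF N V (Suc k)" and e'F: "e' \<in> FF N V (Suc k)" using BF[OF p(1)] ee by auto
    have dsp: "d \<in> sp e" using dd(1)[OF p(1)] ee unfolding d_def by simp
    have dsp': "d \<in> sp e'" using dsp BF(4)[OF p(1)] ee by simp
    have ne: "e d \<noteq> e' d" using dd(2)[OF p(1)] ee unfolding d_def by simp
    have "sp e \<subseteq> {0..<int N}" by (rule sp_sub[OF eF])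
    then have dG: "d \<in> {0..<int N}" using dsp by blast
    have cV: "e d \<in> V" "e' d \<in> V" using FF_D(2)[OF eF] FF_D(2)[OF e'F] by auto
    have e0F: "e(d:=0) \<in> FF N V k" by (rule FF_upd0[OF eF dsp V(2)])
    have e0'F: "e'(d:=0) \<in> FF N V k" by (rule FF_upd0[OF e'F dsp' V(2)])
    have spe: "sp (e'(d:=0)) \<subseteq> sp (e(d:=0))" using BF(4)[OF p(1)] ee unfolding sp_upd0 by simp
    have s1: "sig N e = sig N (e(d:=0)) + e d * d" using sig_cons[OF dG, of "e(d:=0)" "e d"] by simp
    have s2: "sig N e' = sig N (e'(d:=0)) + e' d * d" using sig_cons[OF dG, of "e'(d:=0)" "e' d"] by simp
    have "sig N e mod int N = sig N e' mod int N" using BF(5)[OF p(1)] ee by simp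
    then have dv: "int N dvd sig N e - sig N e'" by (simp add: mod_eq_dvd_iff)
    have "(e d - e' d) * d - (sig N (e'(d:=0)) - sig N (e(d:=0))) = sig N e - sig N e'"
      using s1 s2 by (simp add: algebra_simps)
    then have "((e d - e' d) * d) mod int N = (sig N (e'(d:=0)) - sig N (e(d:=0))) mod int N"
      using dv by (simp add: mod_eq_dvd_iff)
    then have "d \<in> Sol N (e d - e' d) (sig N (e'(d:=0)) - sig N (e(d:=0)))" unfolding Sol_def using dG by simp
    then show "y \<in> T" unfolding T_def p(2) h_def C_def D_def using e0F e0'F cV ne spe ee unfolding d_def by auto
  qed
  have finC: "finite (C e0)" for e0 unfolding C_def
    by (rule finite_cartesian_product) (use finF V(1) in \<open>auto intro: finite_subset[of _ "V \<times> V"]\<close>)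
  have finT: "finite T" unfolding T_def using finF finC Sol_fin unfolding D_def by auto
  have wt0: "wt y \<ge> 0" for y using x unfolding wt_def by simp
  have cardC: "real (card (C e0)) \<le> real (card V) ^ k * real (card V) ^ 2" if "e0 \<in> FF N V k" for e0
  proof -
    have c1: "card {f \<in> FF N V k. sp f \<subseteq> sp e0} \<le> card V ^ card (sp e0)"
      by (rule card_supported[OF sp_fin[OF that] V(1)])
    have "card V \<ge> 1" using V(1,2) by (metis One_nat_def Suc_leI card_gt_0_iff empty_iff)
    then have "card V ^ card (sp e0) \<le> card V ^ k" using FF_D(3)[OF that] by (simp add: power_increasing)
    with c1 have c1': "card {f \<in> FF N V k. sp f \<subseteq> sp e0} \<le> card V ^ k" by linarith
    have "{(c,c'). c \<in> V \<and> c' \<in> V \<and> c \<noteq> c'} \<subseteq> V \<times> V" by auto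
    then have c2: "card {(c,c'). c \<in> V \<and> c' \<in> V \<and> c \<noteq> c'} \<le> card V ^ 2"
      using card_mono[of "V \<times> V"] V(1) by (simp add: card_cartesian_product power2_eq_square)
    have "card (C e0) \<le> card V ^ k * card V ^ 2" unfolding C_def card_cartesian_product
      using c1' c2 by (simp add: mult_le_mono)
    then show ?thesis by (metis of_nat_le_iff of_nat_mult of_nat_power)
  qed
  have "(\<Sum>p\<in>B. x ^ card (sp (fst p))) = (\<Sum>p\<in>B. wt (h p))" using eq by simp
  also have "\<dots> = (\<Sum>y\<in>h ` B. wt y)" using sum.reindex[OF inj, of wt] by simp
  also have "\<dots> \<le> (\<Sum>y\<in>T. wt y)" by (rule sum_mono2[OF finT sub]) (simp add: wt0)
  also have "\<dots> = (\<Sum>e0\<in>FF N V k. \<Sum>z\<in>C e0. real (card (D e0 z)) * (x * x ^ card (sp e0)))"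
    unfolding T_def wt_def by (rule sum_Sigma3') (use finF finC Sol_fin in \<open>auto simp: D_def\<close>)
  also have "\<dots> \<le> (\<Sum>e0\<in>FF N V k. real (card V) ^ k * real (card V) ^ 2 * (real (4*K+2) * (x * x ^ card (sp e0))))"
  proof (rule sum_mono)
    fix e0 assume e0: "e0 \<in> FF N V k"
    have "(\<Sum>z\<in>C e0. real (card (D e0 z)) * (x * x ^ card (sp e0))) \<le> (\<Sum>z\<in>C e0. real (4*K+2) * (x * x ^ card (sp e0)))"
    proof (rule sum_mono)
      fix z assume z: "z \<in> C e0"
      then have zc: "fst (snd z) \<in> V" "snd (snd z) \<in> V" "fst (snd z) \<noteq> snd (snd z)" unfolding C_def by auto
      have "\<bar>fst (snd z)\<bar> \<le> int K" "\<bar>snd (snd z)\<bar> \<le> int K" using zc(1,2) V(3) by auto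
      then have "\<bar>fst (snd z) - snd (snd z)\<bar> \<le> int (2*K)" by linarith
      then have "card (D e0 z) \<le> 2*(2*K)+2" unfolding D_def Sol_def
        by (intro sol_card) (use zc(3) N in auto)
      then have "real (card (D e0 z)) \<le> real (4*K+2)" by linarith
      then show "real (card (D e0 z)) * (x * x ^ card (sp e0)) \<le> real (4*K+2) * (x * x ^ card (sp e0))"
        using x by (simp add: mult_right_mono)
    qed
    also have "\<dots> = real (card (C e0)) * (real (4*K+2) * (x * x ^ card (sp e0)))" by simp
    also have "\<dots> \<le> real (card V) ^ k * real (card V) ^ 2 * (real (4*K+2) * (x * x ^ card (sp e0)))"
      by (rule mult_right_mono[OF cardC[OF e0]]) (use x in simp)
    finally show "(\<Sum>z\<in>C e0. real (card (D e0 z)) * (x * x ^ card (sp e0)))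
       \<le> real (card V) ^ k * real (card V) ^ 2 * (real (4*K+2) * (x * x ^ card (sp e0)))" .
  qed
  also have "\<dots> = real (4*K+2) * real (card V) ^ k * real (card V) ^ 2 * x * (\<Sum>e\<in>FF N V k. x ^ card (sp e))"
    by (simp add: sum_distrib_left mult.assoc mult.left_commute)
  finally show ?thesis unfolding B_def .
qed

definition WU :: "(int \<Rightarrow> int) list \<Rightarrow> int set" where "WU es = \<Union> (sp ` set es)"

fun chn :: "nat \<Rightarrow> int set \<Rightarrow> nat \<Rightarrow> int \<Rightarrow> (int \<Rightarrow> int) list \<Rightarrow> bool" where
  "chn N V t g [] = True"
| "chn N V t g (e # es) = (chn N V t g es \<and> e \<in> FF N V t \<and> sig N e mod int N = g mod int N \<and> \<not> sp e \<subseteq> WU es)"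

definition Ch :: "nat \<Rightarrow> int set \<Rightarrow> nat \<Rightarrow> int \<Rightarrow> nat \<Rightarrow> (int \<Rightarrow> int) list set" where
  "Ch N V t g j = {es. length es = j \<and> chn N V t g es}"

definition RR :: "nat \<Rightarrow> int set \<Rightarrow> nat \<Rightarrow> int \<Rightarrow> (int \<Rightarrow> int) list \<Rightarrow> (int \<Rightarrow> int) set" where
  "RR N V t g es = {e \<in> FF N V t. sig N e mod int N = g mod int N \<and> \<not> sp e \<subseteq> WU es}"

lemma WU_Cons: "WU (e # es) = sp e \<union> WU es" unfolding WU_def by simp

lemma chn_drop: "chn N V t g es \<Longrightarrow> chn N V t g (drop k es)"
proof (induction es arbitrary: k)
  case Nil then show ?case by simp
next
  case (Cons e es) then show ?case by (cases k) auto
qed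

lemma WU_drop: "WU (drop k es) \<subseteq> WU es"
  unfolding WU_def using set_drop_subset by fastforce

lemma WU_card: "chn N V t g es \<Longrightarrow> finite (WU es) \<and> card (WU es) \<le> t * length es \<and> WU es \<subseteq> {0..<int N}"
proof (induction es)
  case Nil then show ?case by (simp add: WU_def)
next
  case (Cons e es)
  then have eF: "e \<in> FF N V t" and IH: "finite (WU es)" "card (WU es) \<le> t * length es" "WU es \<subseteq> {0..<int N}" by auto
  have "card (sp e \<union> WU es) \<le> card (sp e) + card (WU es)" by (rule card_Un_le)
  also have "\<dots> \<le> t + t * length es" using FF_D(3)[OF eF] IH(2) by linarith
  finally show ?case unfolding WU_Cons using sp_fin[OF eF] sp_sub[OF eF] IH by simp
qed

lemma Ch_Suc: "Ch N V t g (Suc j) = (\<lambda>(es, e). e # es) ` (SIGMA es:Ch N V t g j. RR N V t g es)"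
proof
  show "Ch N V t g (Suc j) \<subseteq> (\<lambda>(es, e). e # es) ` (SIGMA es:Ch N V t g j. RR N V t g es)"
  proof
    fix xs assume "xs \<in> Ch N V t g (Suc j)"
    then obtain e es where xs: "xs = e # es" "length es = j" "chn N V t g (e # es)"
      unfolding Ch_def by (cases xs) auto
    then have "(es, e) \<in> (SIGMA es:Ch N V t g j. RR N V t g es)" unfolding Ch_def RR_def by auto
    then show "xs \<in> (\<lambda>(es, e). e # es) ` (SIGMA es:Ch N V t g j. RR N V t g es)" using xs(1) by force
  qed
  show "(\<lambda>(es, e). e # es) ` (SIGMA es:Ch N V t g j. RR N V t g es) \<subseteq> Ch N V t g (Suc j)"
    unfolding Ch_def RR_def by auto
qed

lemma Ch_fin: "finite V \<Longrightarrow> finite (Ch N V t g j)"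
proof (induction j)
  case 0
  have "Ch N V t g 0 = {[]}" unfolding Ch_def by auto
  then show ?case by simp
next
  case (Suc j)
  have "finite (RR N V t g es)" for es unfolding RR_def using FF_fin[OF Suc.prems] by auto
  then show ?case unfolding Ch_Suc using Suc by auto
qed

lemma chain_bound:
  fixes x :: real
  assumes V: "finite V" "0 \<in> V" "\<forall>v\<in>V. \<bar>v\<bar> \<le> int K" and x: "x \<ge> 0" and N: "N > 0"
  shows "j \<le> J \<Longrightarrow> (\<Sum>es\<in>Ch N V (Suc t') g j. x ^ card (WU es))
     \<le> (real (2*K+2) * real (card V) * x * real (card V) ^ (Suc t' * J) * (1 + real N * real (card V) * x) ^ t') ^ j"
proof (induction j)
  case 0
  have "Ch N V (Suc t') g 0 = {[]}" unfolding Ch_def by auto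
  then show ?case by (simp add: WU_def)
next
  case (Suc j)
  let ?t = "Suc t'"
  let ?Bc = "real (2*K+2) * real (card V) * x * real (card V) ^ (?t * J) * (1 + real N * real (card V) * x) ^ t'"
  have finRR: "finite (RR N V ?t g es)" for es unfolding RR_def using FF_fin[OF V(1)] by auto
  have inj: "inj_on (\<lambda>(es, e). e # es) (SIGMA es:Ch N V ?t g j. RR N V ?t g es)"
    by (rule inj_onI) auto
  have cv1: "real (card V) \<ge> 1" using V(1,2) by (metis One_nat_def Suc_leI card_gt_0_iff empty_iff of_nat_1 of_nat_le_iff)
  have Bc0: "?Bc \<ge> 0" using x by simp
  have "(\<Sum>es\<in>Ch N V ?t g (Suc j). x ^ card (WU es))
      = (\<Sum>y\<in>(SIGMA es:Ch N V ?t g j. RR N V ?t g es). x ^ card (WU (snd y # fst y)))"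
    unfolding Ch_Suc by (subst sum.reindex[OF inj]) (simp add: case_prod_beta)
  also have "\<dots> = (\<Sum>es\<in>Ch N V ?t g j. \<Sum>e\<in>RR N V ?t g es. x ^ card (WU (e # es)))"
  proof -
    have "(\<Sum>es\<in>Ch N V ?t g j. \<Sum>e\<in>RR N V ?t g es. x ^ card (WU (e # es)))
       = (\<Sum>y\<in>(SIGMA es:Ch N V ?t g j. RR N V ?t g es). (\<lambda>(es, e). x ^ card (WU (e # es))) y)"
      by (rule sum.Sigma) (auto simp: Ch_fin[OF V(1)] finRR)
    then show ?thesis by (simp add: split_def)
  qed
  also have "\<dots> \<le> (\<Sum>es\<in>Ch N V ?t g j. x ^ card (WU es) * ?Bc)"
  proof (rule sum_mono)
    fix es assume es: "es \<in> Ch N V ?t g j"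
    then have ch: "chn N V ?t g es" and len: "length es = j" unfolding Ch_def by auto
    note wu = WU_card[OF ch]
    have "(\<Sum>e\<in>RR N V ?t g es. x ^ card (WU (e # es))) = (\<Sum>e\<in>RR N V ?t g es. x ^ card (WU es) * x ^ card (sp e - WU es))"
    proof (rule sum.cong[OF refl])
      fix e assume "e \<in> RR N V ?t g es"
      then have eF: "e \<in> FF N V ?t" unfolding RR_def by simp
      have "WU (e # es) = WU es \<union> (sp e - WU es)" unfolding WU_Cons by auto
      moreover have "card (WU es \<union> (sp e - WU es)) = card (WU es) + card (sp e - WU es)"
        by (rule card_Un_disjoint) (use wu sp_fin[OF eF] in auto)
      ultimately show "x ^ card (WU (e # es)) = x ^ card (WU es) * x ^ card (sp e - WU es)"
        by (simp add: power_add)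
    qed
    also have "\<dots> = x ^ card (WU es) * (\<Sum>e\<in>RR N V ?t g es. x ^ card (sp e - WU es))"
      by (simp add: sum_distrib_left)
    also have "\<dots> \<le> x ^ card (WU es) * ?Bc"
    proof (rule mult_left_mono)
      show "0 \<le> x ^ card (WU es)" using x by simp
      have "(\<Sum>e\<in>RR N V ?t g es. x ^ card (sp e - WU es))
          \<le> real (2*K+2) * real (card V) * x * (\<Sum>e\<in>FF N V t'. x ^ card (sp e - WU es))"
        unfolding RR_def by (rule psi_bound[OF V x _ _ N]) (use wu in auto)
      also have "\<dots> \<le> real (2*K+2) * real (card V) * x * (real (card V) ^ card (WU es) * (1 + real N * real (card V) * x) ^ t')"
        by (rule mult_left_mono[OF phi_bound[OF V(1,2) x]]) (use wu x in auto)
      also have "\<dots> \<le> ?Bc"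
      proof -
        have "card (WU es) \<le> ?t * J" using wu len Suc.prems
          by (meson dual_order.trans mult_le_mono2 Suc_leD)
        then have "real (card V) ^ card (WU es) \<le> real (card V) ^ (?t * J)" by (rule power_increasing[OF _ cv1])
        then show ?thesis using x by (simp add: mult_left_mono mult_right_mono mult.assoc)
      qed
      finally show "(\<Sum>e\<in>RR N V ?t g es. x ^ card (sp e - WU es)) \<le> ?Bc" .
    qed
    finally show "(\<Sum>e\<in>RR N V ?t g es. x ^ card (WU (e # es))) \<le> x ^ card (WU es) * ?Bc" .
  qed
  also have "\<dots> = (\<Sum>es\<in>Ch N V ?t g j. x ^ card (WU es)) * ?Bc" by (simp add: sum_distrib_right)
  also have "\<dots> \<le> ?Bc ^ j * ?Bc" using Suc.IH Suc.prems Bc0 by (simp add: mult_right_mono)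
  also have "\<dots> = ?Bc ^ Suc j" by simp
  finally show ?case .
qed

lemma binom_ratio:
  "u \<le> n \<Longrightarrow> n \<le> N \<Longrightarrow> real ((N-u) choose (n-u)) * real N ^ u \<le> real (N choose n) * real n ^ u"
proof (induction u)
  case 0 then show ?case by simp
next
  case (Suc u)
  define X where "X = real ((N-u) choose (n-u))"
  define X' where "X' = real ((N - Suc u) choose (n - Suc u))"
  have u1: "Suc u \<le> n" "n \<le> N" by fact+
  have IH: "X * real N ^ u \<le> real (N choose n) * real n ^ u" using Suc u1 unfolding X_def by simp
  have id: "Suc (N - Suc u) * ((N - Suc u) choose (n - Suc u)) = (Suc (N - Suc u) choose Suc (n - Suc u)) * Suc (n - Suc u)"
    by (rule Suc_times_binomial_eq)
  have e1: "Suc (N - Suc u) = N - u" "Suc (n - Suc u) = n - u" using u1 by auto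
  have id2: "X' * real (N - u) = X * real (n - u)" using id unfolding e1 X_def X'_def
    by (metis of_nat_mult mult.commute)
  have pos: "real (N - u) > 0" using u1 by simp
  have X0: "X \<ge> 0" "X' \<ge> 0" unfolding X_def X'_def by auto
  have "X' * real N * real (N - u) = X * real (n - u) * real N" using id2 by (simp add: algebra_simps)
  also have "\<dots> \<le> X * real n * real (N - u)"
  proof -
    have "real n * real u \<le> real N * real u" using u1 by (simp add: mult_right_mono)
    then have "real (n - u) * real N \<le> real n * real (N - u)" using u1
      by (simp add: of_nat_diff algebra_simps)
    then show ?thesis using X0 by (simp add: mult.assoc mult_left_mono)
  qed
  finally have "X' * real N \<le> X * real n" using pos by (simp add: mult_le_cancel_right)
  then have "X' * real N * real N ^ u \<le> X * real n * real N ^ u" by (rule mult_right_mono) simp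
  then have "X' * real N ^ Suc u \<le> X * real N ^ u * real n" by (simp add: algebra_simps)
  also have "\<dots> \<le> real (N choose n) * real n ^ u * real n" by (rule mult_right_mono[OF IH]) simp
  finally show ?case unfolding X'_def by (simp add: algebra_simps)
qed

lemma count_super:
  assumes W: "W \<subseteq> {0..<int N}" and n: "n \<le> N"
  shows "real (card {S. S \<subseteq> {0..<int N} \<and> card S = n \<and> W \<subseteq> S}) * real N ^ card W \<le> real (N choose n) * real n ^ card W"
proof (cases "card W \<le> n")
  case False
  have E: "{S. S \<subseteq> {0..<int N} \<and> card S = n \<and> W \<subseteq> S} = {}"
  proof (rule ccontr)
    assume "{S. S \<subseteq> {0..<int N} \<and> card S = n \<and> W \<subseteq> S} \<noteq> {}"
    then obtain S where S: "S \<subseteq> {0..<int N}" "card S = n" "W \<subseteq> S" by auto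
    have "finite S" using finite_subset[OF S(1)] by simp
    then have "card W \<le> card S" using S(3) by (rule card_mono)
    then show False using False S(2) by simp
  qed
  show ?thesis unfolding E by simp
next
  case True
  have finW: "finite W" using finite_subset[OF W] by simp
  define A where "A = {S. S \<subseteq> {0..<int N} \<and> card S = n \<and> W \<subseteq> S}"
  define A' where "A' = {T. T \<subseteq> {0..<int N} - W \<and> card T = n - card W}"
  have bij: "bij_betw (\<lambda>S. S - W) A A'"
  proof (rule bij_betw_byWitness[where f' = "\<lambda>T. T \<union> W"])
    show "\<forall>a\<in>A. (a - W) \<union> W = a" unfolding A_def by auto
    show "\<forall>a\<in>A'. a \<union> W - W = a" unfolding A'_def by auto
    show "(\<lambda>S. S - W) ` A \<subseteq> A'"
    proof
      fix T assume "T \<in> (\<lambda>S. S - W) ` A"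
      then obtain S where S: "S \<subseteq> {0..<int N}" "card S = n" "W \<subseteq> S" "T = S - W" unfolding A_def by auto
      have "card (S - W) = card S - card W" by (rule card_Diff_subset[OF finW S(3)])
      then show "T \<in> A'" unfolding A'_def using S by auto
    qed
    show "(\<lambda>T. T \<union> W) ` A' \<subseteq> A"
    proof
      fix S assume "S \<in> (\<lambda>T. T \<union> W) ` A'"
      then obtain T where T: "T \<subseteq> {0..<int N} - W" "card T = n - card W" "S = T \<union> W" unfolding A'_def by auto
      have finT: "finite T" using finite_subset[OF T(1)] by simp
      have "card (T \<union> W) = card T + card W" by (rule card_Un_disjoint) (use finT finW T(1) in auto)
      then show "S \<in> A" unfolding A_def using T True W by auto
    qed
  qed
  have "card A = card A'" using bij by (rule bij_betw_same_card)
  also have "\<dots> = card ({0..<int N} - W) choose (n - card W)" unfolding A'_def by (rule n_subsets) simp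
  also have "card ({0..<int N} - W) = N - card W" using W finW by (simp add: card_Diff_subset)
  finally have cA: "card A = (N - card W) choose (n - card W)" .
  show ?thesis unfolding A_def[symmetric] cA by (rule binom_ratio[OF True n])
qed

lemma exists_good:
  fixes W1 :: "'a \<Rightarrow> int set" and W2 :: "'b \<Rightarrow> int set"
  assumes fin: "finite I1" "finite I2" and W: "\<forall>i\<in>I1. W1 i \<subseteq> {0..<int N}" "\<forall>i\<in>I2. W2 i \<subseteq> {0..<int N}"
    and n: "n \<le> N" and N: "N > 0"
    and sm: "(\<Sum>i\<in>I1. (real n / real N) ^ card (W1 i)) + (\<Sum>i\<in>I2. (real n / real N) ^ card (W2 i)) < 1"
  shows "\<exists>S. S \<subseteq> {0..<int N} \<and> card S = n \<and> (\<forall>i\<in>I1. \<not> W1 i \<subseteq> S) \<and> (\<forall>i\<in>I2. \<not> W2 i \<subseteq> S)"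
proof (rule ccontr)
  assume na: "\<not> ?thesis"
  define Om where "Om = {S. S \<subseteq> {0..<int N} \<and> card S = n}"
  define C where "C = real (N choose n)"
  have cOm: "card Om = N choose n" unfolding Om_def by (subst n_subsets) simp_all
  have Cpos: "C > 0" unfolding C_def using n by simp
  have bnd: "real (card {S. S \<subseteq> {0..<int N} \<and> card S = n \<and> W \<subseteq> S}) \<le> C * (real n / real N) ^ card W"
    if "W \<subseteq> {0..<int N}" for W
  proof -
    have "real (card {S. S \<subseteq> {0..<int N} \<and> card S = n \<and> W \<subseteq> S}) * real N ^ card W \<le> C * real n ^ card W"
      unfolding C_def by (rule count_super[OF that n])
    moreover have Np: "real N ^ card W > 0" using N by simp
    ultimately have "real (card {S. S \<subseteq> {0..<int N} \<and> card S = n \<and> W \<subseteq> S}) \<le> (C * real n ^ card W) / real N ^ card W"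
      by (simp add: pos_le_divide_eq)
    then show ?thesis by (simp add: power_divide)
  qed
  have sub: "Om \<subseteq> (\<Union>i\<in>I1. {S. S \<subseteq> {0..<int N} \<and> card S = n \<and> W1 i \<subseteq> S}) \<union> (\<Union>i\<in>I2. {S. S \<subseteq> {0..<int N} \<and> card S = n \<and> W2 i \<subseteq> S})"
  proof
    fix S assume "S \<in> Om"
    then have S: "S \<subseteq> {0..<int N}" "card S = n" unfolding Om_def by auto
    then have "(\<exists>i\<in>I1. W1 i \<subseteq> S) \<or> (\<exists>i\<in>I2. W2 i \<subseteq> S)" using na by blast
    then show "S \<in> (\<Union>i\<in>I1. {S. S \<subseteq> {0..<int N} \<and> card S = n \<and> W1 i \<subseteq> S}) \<union> (\<Union>i\<in>I2. {S. S \<subseteq> {0..<int N} \<and> card S = n \<and> W2 i \<subseteq> S})"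
      using S by blast
  qed
  have f1: "finite (\<Union>i\<in>I1. {S. S \<subseteq> {0..<int N} \<and> card S = n \<and> W1 i \<subseteq> S})"
    by (rule finite_subset[of _ "Pow {0..<int N}"]) auto
  have f2: "finite (\<Union>i\<in>I2. {S. S \<subseteq> {0..<int N} \<and> card S = n \<and> W2 i \<subseteq> S})"
    by (rule finite_subset[of _ "Pow {0..<int N}"]) auto
  define U1 where "U1 = (\<Union>i\<in>I1. {S. S \<subseteq> {0..<int N} \<and> card S = n \<and> W1 i \<subseteq> S})"
  define U2 where "U2 = (\<Union>i\<in>I2. {S. S \<subseteq> {0..<int N} \<and> card S = n \<and> W2 i \<subseteq> S})"
  have c1: "card Om \<le> card (U1 \<union> U2)" using card_mono[OF finite_UnI[OF f1 f2] sub] unfolding U1_def U2_def .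
  have c2: "card (U1 \<union> U2) \<le> card U1 + card U2" by (rule card_Un_le)
  have c3: "card U1 \<le> (\<Sum>i\<in>I1. card {S. S \<subseteq> {0..<int N} \<and> card S = n \<and> W1 i \<subseteq> S})"
    unfolding U1_def by (rule card_UN_le[OF fin(1)])
  have c4: "card U2 \<le> (\<Sum>i\<in>I2. card {S. S \<subseteq> {0..<int N} \<and> card S = n \<and> W2 i \<subseteq> S})"
    unfolding U2_def by (rule card_UN_le[OF fin(2)])
  have "card Om \<le> (\<Sum>i\<in>I1. card {S. S \<subseteq> {0..<int N} \<and> card S = n \<and> W1 i \<subseteq> S}) + (\<Sum>i\<in>I2. card {S. S \<subseteq> {0..<int N} \<and> card S = n \<and> W2 i \<subseteq> S})"
    using c1 c2 c3 c4 by linarith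
  then have "real (card Om) \<le> real ((\<Sum>i\<in>I1. card {S. S \<subseteq> {0..<int N} \<and> card S = n \<and> W1 i \<subseteq> S}) + (\<Sum>i\<in>I2. card {S. S \<subseteq> {0..<int N} \<and> card S = n \<and> W2 i \<subseteq> S}))"
    by (simp only: of_nat_le_iff)
  also have "\<dots> = (\<Sum>i\<in>I1. real (card {S. S \<subseteq> {0..<int N} \<and> card S = n \<and> W1 i \<subseteq> S})) + (\<Sum>i\<in>I2. real (card {S. S \<subseteq> {0..<int N} \<and> card S = n \<and> W2 i \<subseteq> S}))"
    by simp
  also have "\<dots> \<le> (\<Sum>i\<in>I1. C * (real n / real N) ^ card (W1 i)) + (\<Sum>i\<in>I2. C * (real n / real N) ^ card (W2 i))"
    by (intro add_mono sum_mono bnd) (use W in auto)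
  also have "\<dots> = C * ((\<Sum>i\<in>I1. (real n / real N) ^ card (W1 i)) + (\<Sum>i\<in>I2. (real n / real N) ^ card (W2 i)))"
    by (simp add: sum_distrib_left distrib_left)
  also have "\<dots> < C * 1" using sm Cpos by (intro mult_strict_left_mono) auto
  finally show False unfolding cOm C_def by simp
qed

lemma good_packing:
  assumes V: "V = M \<union> {0}" "finite M" and S: "S \<subseteq> {0..<int N}" and L: "L \<ge> 1"
    and noch: "\<forall>g\<in>{0..<int N}. \<forall>es\<in>Ch N V t g L. \<not> WU es \<subseteq> S"
    and nopair: "\<forall>p\<in>PP N V t. \<not> sp (fst p) \<subseteq> S"
  shows "lambda_packing N (2^(t*(L-1))) M t S"
  unfolding lambda_packing_def
proof
  fix g assume g: "g \<in> {0..<int N}"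
  have finV: "finite V" using V by simp
  have V0: "0 \<in> V" using V by simp
  define R where "R = {e\<in>FF N V t. sig N e mod int N = g mod int N \<and> sp e \<subseteq> S}"
  have finR: "finite R" unfolding R_def using FF_fin[OF finV] by auto
  have sub: "reps N M t S g \<subseteq> R"
  proof
    fix e assume "e \<in> reps N M t S g"
    then have e: "\<forall>s. s \<notin> S \<longrightarrow> e s = 0" "\<forall>s\<in>S. e s \<in> M \<union> {0}" "card {s\<in>S. e s \<noteq> 0} \<le> t"
      "(\<Sum>s\<in>S. e s * s) mod int N = g mod int N" unfolding reps_def by auto
    have spS: "sp e \<subseteq> S" unfolding sp_def using e(1) by auto
    have "{s\<in>S. e s \<noteq> 0} = sp e" using spS unfolding sp_def by auto
    then have c: "card (sp e) \<le> t" using e(3) by simp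
    have eF: "e \<in> FF N V t"
    proof (rule FF_I)
      show "e s = 0" if "s \<notin> {0..<int N}" for s using that S e(1) by auto
      show "e s \<in> V" for s using e(1,2) V(1) by (cases "s \<in> S") auto
    qed (rule c)
    have "sig N e = (\<Sum>s\<in>S. e s * s)" unfolding sig_def
      by (rule sum.mono_neutral_right) (use S e(1) in auto)
    then show "e \<in> R" unfolding R_def using eF e(4) spS by simp
  qed
  define P where "P j = (\<exists>es. chn N V t g es \<and> length es = j \<and> WU es \<subseteq> S)" for j
  have P0: "P 0" unfolding P_def by (intro exI[of _ "[]"]) (simp add: WU_def)
  have Pb: "\<forall>y. P y \<longrightarrow> y \<le> L - 1"
  proof (intro allI impI)
    fix y assume "P y"
    then obtain es where es: "chn N V t g es" "length es = y" "WU es \<subseteq> S" unfolding P_def by auto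
    show "y \<le> L - 1"
    proof (rule ccontr)
      assume "\<not> y \<le> L - 1"
      then have yL: "y \<ge> L" using L by simp
      define es' where "es' = drop (y - L) es"
      have "es' \<in> Ch N V t g L" unfolding Ch_def es'_def using chn_drop[OF es(1)] es(2) yL by auto
      moreover have "WU es' \<subseteq> S" unfolding es'_def using WU_drop es(3) by blast
      ultimately show False using noch g by blast
    qed
  qed
  obtain j where j: "P j" "\<forall>y. P y \<longrightarrow> y \<le> j" using Nat.ex_has_greatest_nat[OF P0 Pb] by blast
  obtain es where es: "chn N V t g es" "length es = j" "WU es \<subseteq> S" using j(1) unfolding P_def by auto
  have jL: "j \<le> L - 1" using Pb j(1) by simp
  have inW: "sp e \<subseteq> WU es" if "e \<in> R" for e
  proof (rule ccontr)
    assume na: "\<not> sp e \<subseteq> WU es"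
    have "chn N V t g (e # es)" using es(1) that na unfolding R_def by simp
    moreover have "WU (e # es) \<subseteq> S" using es(3) that unfolding WU_Cons R_def by auto
    ultimately have "P (Suc j)" unfolding P_def using es(2) by (intro exI[of _ "e # es"]) simp
    then show False using j(2) by fastforce
  qed
  have inj: "inj_on sp R"
  proof (rule inj_onI)
    fix e e' assume a: "e \<in> R" "e' \<in> R" "sp e = sp e'"
    show "e = e'"
    proof (rule ccontr)
      assume "e \<noteq> e'"
      then have "(e, e') \<in> PP N V t" using a unfolding R_def PP_def by auto
      moreover have "sp e \<subseteq> S" using a(1) unfolding R_def by simp
      ultimately show False using nopair by fastforce
    qed
  qed
  note wu = WU_card[OF es(1)]
  have "card (reps N M t S g) \<le> card R" by (rule card_mono[OF finR sub])
  also have "\<dots> = card (sp ` R)" using inj by (simp add: card_image)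
  also have "\<dots> \<le> card (Pow (WU es))" by (rule card_mono) (use wu inW in auto)
  also have "\<dots> = 2 ^ card (WU es)" using wu by (simp add: card_Pow)
  also have "\<dots> \<le> 2 ^ (t * (L - 1))"
  proof (rule power_increasing)
    show "card (WU es) \<le> t * (L - 1)" using wu es(2) jL by (meson le_trans mult_le_mono2)
  qed simp
  finally show "card (reps N M t S g) \<le> 2 ^ (t * (L - 1))" .
qed

lemma powr_1m: "(x::real) > 0 \<Longrightarrow> x powr (1 - a) = x * x powr (-a)"
  using powr_add[of x 1 "-a"] by simp

lemma alg_bound:
  fixes b c n N :: real
  assumes n: "n \<ge> 1" and N: "N > 0" and c: "c \<ge> 1" and b: "b \<ge> 0"
  shows "b * c * (n/N) * c^m * (1 + N*c*(n/N))^t' \<le> (b * c^(m+1) * (2*c)^t') * (n^(Suc t')/N)"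
proof -
  have e: "N*c*(n/N) = c*n" using N by simp
  have "1 * 1 \<le> c * n" using n c by (intro mult_mono) auto
  then have h1: "1 \<le> c * n" by simp
  then have "1 + c*n \<le> 2*c*n" by simp
  then have p: "(1 + c*n)^t' \<le> (2*c*n)^t'" by (rule power_mono) (use h1 in linarith)
  have nn: "0 \<le> b * c * (n/N) * c^m" using b c n N by simp
  have "b * c * (n/N) * c^m * (1 + N*c*(n/N))^t' \<le> b * c * (n/N) * c^m * (2*c*n)^t'"
    unfolding e by (rule mult_left_mono[OF p nn])
  also have "\<dots> = (b * c^(m+1) * (2*c)^t') * (n^(Suc t')/N)"
    by (simp add: power_mult_distrib algebra_simps)
  finally show ?thesis .
qed

lemma n_bound:
  fixes \<epsilon> :: real and t N :: nat
  assumes t: "t > 0" and N: "N \<ge> 1" and a: "\<alpha> = 1 / real t - \<epsilon>" "\<alpha> > 0"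
  shows "real (nat \<lceil>real N powr \<alpha>\<rceil>) ^ t / real N \<le> 2^t * real N powr (- (real t * \<epsilon>))"
proof -
  define a where "a = real N powr \<alpha>"
  have a1: "a \<ge> 1" unfolding a_def using N a(2) by (simp add: ge_one_powr_ge_zero)
  have "real (nat \<lceil>a\<rceil>) \<le> a + 1" using a1 by linarith
  also have "\<dots> \<le> 2 * a" using a1 by simp
  finally have nb: "real (nat \<lceil>a\<rceil>) \<le> 2 * a" .
  have "real (nat \<lceil>a\<rceil>) ^ t \<le> (2 * a) ^ t" by (rule power_mono[OF nb]) simp
  also have "\<dots> = 2^t * real N powr (real t * \<alpha>)" unfolding a_def power_mult_distrib
    using N by (simp add: powr_power)
  also have "real t * \<alpha> = 1 - real t * \<epsilon>" using t unfolding a(1) by (simp add: right_diff_distrib)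
  finally have 1: "real (nat \<lceil>a\<rceil>) ^ t \<le> 2^t * real N powr (1 - real t * \<epsilon>)" .
  have "real N powr (1 - real t * \<epsilon>) = real N * real N powr (- (real t * \<epsilon>))"
    using N by (intro powr_1m) simp
  with 1 have "real (nat \<lceil>a\<rceil>) ^ t \<le> real N * (2^t * real N powr (- (real t * \<epsilon>)))" by (simp add: algebra_simps)
  then show ?thesis unfolding a_def using N by (simp add: divide_le_eq mult.commute)
qed

lemma final_asym:
  fixes \<epsilon> C1 C2 :: real and t L :: nat
  assumes t: "t > 0" and e: "\<epsilon> > 0" and L: "real t * \<epsilon> * real L \<ge> 1 + real t * \<epsilon>" and C: "C1 \<ge> 0" "C2 \<ge> 0"
  shows "\<exists>N0::nat. \<forall>N\<ge>N0. \<forall>y::real. 0 \<le> y \<longrightarrow> y \<le> 2^t * real N powr (- (real t * \<epsilon>)) \<longrightarrow>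
           real N * (C1 * y)^L + C2 * y < 1"
proof -
  define d where "d = real t * \<epsilon>"
  have d: "d > 0" unfolding d_def using t e by simp
  define C3 where "C3 = C1^L * 2^(t*L) + C2 * 2^t + 1"
  have C3: "C3 \<ge> 1" unfolding C3_def using C by simp
  define N0 where "N0 = nat \<lceil>C3 powr (1/d)\<rceil> + 1"
  show ?thesis
  proof (intro exI[of _ N0] allI impI)
    fix N :: nat and y :: real
    assume N: "N \<ge> N0" and y: "0 \<le> y" "y \<le> 2^t * real N powr (- (real t * \<epsilon>))"
    have N1: "real N \<ge> 1" using N unfolding N0_def by simp
    have Nb: "real N > C3 powr (1/d)" using N unfolding N0_def by linarith
    define \<eta> where "\<eta> = real N powr (- d)"
    have eta0: "\<eta> > 0" unfolding \<eta>_def using N1 by simp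
    have "(C3 powr (1/d)) powr d < real N powr d"
      by (rule powr_less_mono2[OF d _ Nb]) simp
    then have "C3 < real N powr d" using C3 d by (simp add: powr_powr)
    then have etaC: "\<eta> * C3 < 1" unfolding \<eta>_def using N1 by (simp add: powr_minus field_simps)
    have yb: "y \<le> 2^t * \<eta>" using y(2) unfolding \<eta>_def d_def .
    have "real N * \<eta>^L = real N powr (1 - d * real L)"
    proof -
      have "\<eta>^L = real N powr (real L * (- d))" unfolding \<eta>_def using N1 by (simp add: powr_power)
      also have "\<dots> = real N powr (- (d * real L))" by (simp add: algebra_simps)
      finally show ?thesis using powr_1m[of "real N" "d * real L"] N1 by simp
    qed
    also have "\<dots> \<le> real N powr (- d)" using L N1 unfolding d_def by (intro powr_mono) (auto simp: algebra_simps)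
    finally have NL: "real N * \<eta>^L \<le> \<eta>" unfolding \<eta>_def .
    have "real N * (C1 * y)^L \<le> real N * (C1 * (2^t * \<eta>))^L"
      using y(1) yb C N1 by (intro mult_left_mono power_mono mult_left_mono) auto
    also have "\<dots> = C1^L * 2^(t*L) * (real N * \<eta>^L)" by (simp add: power_mult_distrib power_mult[symmetric] algebra_simps)
    also have "\<dots> \<le> C1^L * 2^(t*L) * \<eta>" using NL C by (intro mult_left_mono) auto
    finally have 1: "real N * (C1 * y)^L \<le> C1^L * 2^(t*L) * \<eta>" .
    have 2: "C2 * y \<le> C2 * 2^t * \<eta>" using yb C by (simp add: mult_left_mono mult.assoc)
    have "real N * (C1 * y)^L + C2 * y \<le> (C1^L * 2^(t*L) + C2 * 2^t) * \<eta>" using 1 2 by (simp add: algebra_simps)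
    also have "\<dots> < C3 * \<eta>" unfolding C3_def using eta0 by simp
    also have "\<dots> < 1" using etaC by (simp add: mult.commute)
    finally show "real N * (C1 * y)^L + C2 * y < 1" .
  qed
qed


theorem theorem15:
  fixes t :: nat and \<epsilon> :: real
  assumes "t > 0" and "0 < \<epsilon>" and "\<epsilon> < 1 / real t"
  shows "\<exists>lam :: nat. \<forall>kp km :: nat. 0 \<le> km \<and> km \<le> kp \<and> kp + km \<ge> 1 \<longrightarrow>
           (\<exists>N0 :: nat. \<forall>N :: nat. N \<ge> N0 \<and> gcd N (fact kp) = 1 \<longrightarrow>
              (\<exists>S :: int set. S \<subseteq> {0..<int N} \<and>
                 (1/2) * real N powr (1 / real t - \<epsilon>) \<le> real (card S) \<and>
                 real (card S) \<le> (3/2) * real N powr (1 / real t - \<epsilon>) \<and>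
                 lambda_packing N lam (punct_interval (- int km) (int kp)) t S))"
proof -
  obtain t' where t': "t = Suc t'" using assms(1) by (cases t) auto
  define \<alpha> where "\<alpha> = 1 / real t - \<epsilon>"
  have \<alpha>0: "\<alpha> > 0" using assms(3) by (simp add: \<alpha>_def)
  have \<alpha>1: "\<alpha> \<le> 1"
  proof -
    have "1 / real t \<le> 1" using assms(1) by simp
    then show ?thesis unfolding \<alpha>_def using assms(2) by linarith
  qed
  define L where "L = nat \<lceil>1 / (real t * \<epsilon>)\<rceil> + 1"
  have L1: "L \<ge> 1" unfolding L_def by simp
  have te: "real t * \<epsilon> > 0" using assms(1,2) by simp
  have Lb: "real t * \<epsilon> * real L \<ge> 1 + real t * \<epsilon>"
  proof -
    have "real L \<ge> 1 / (real t * \<epsilon>) + 1" unfolding L_def by linarith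
    then have "real t * \<epsilon> * real L \<ge> real t * \<epsilon> * (1 / (real t * \<epsilon>) + 1)"
      using te by (simp add: mult_left_mono)
    also have "real t * \<epsilon> * (1 / (real t * \<epsilon>) + 1) = 1 + real t * \<epsilon>" using te assms(1,2) by (simp add: field_simps)
    finally show ?thesis .
  qed
  show ?thesis
  proof (rule exI[of _ "2^(t*(L-1))"], intro allI impI)
    fix kp km :: nat assume k: "0 \<le> km \<and> km \<le> kp \<and> kp + km \<ge> 1"
    define M where "M = punct_interval (- int km) (int kp)"
    define V where "V = {- int km..int kp}"
    have VM: "V = M \<union> {0}" unfolding V_def M_def punct_interval_def by auto
    have finM: "finite M" unfolding M_def punct_interval_def by simp
    have finV: "finite V" unfolding V_def by simp
    have V0: "0 \<in> V" unfolding V_def by simp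
    have Vb: "\<forall>v\<in>V. \<bar>v\<bar> \<le> int kp" unfolding V_def using k by auto
    define cV where "cV = real (card V)"
    have cV1: "cV \<ge> 1" unfolding cV_def using finV V0
      by (metis One_nat_def Suc_leI card_gt_0_iff empty_iff of_nat_1 of_nat_le_iff)
    define C1 where "C1 = real (2*kp+2) * cV^(t*L+1) * (2*cV)^t'"
    define C2 where "C2 = real (4*kp+2) * cV^(t'+1+1) * (2*cV)^t'"
    have C1: "C1 \<ge> 0" and C2: "C2 \<ge> 0" unfolding C1_def C2_def using cV1 by auto
    obtain N0 where N0: "\<forall>N\<ge>N0. \<forall>y::real. 0 \<le> y \<longrightarrow> y \<le> 2^t * real N powr (- (real t * \<epsilon>)) \<longrightarrow>
           real N * (C1 * y)^L + C2 * y < 1"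
      using final_asym[OF assms(1) assms(2) Lb C1 C2] by blast
    define N1 where "N1 = max N0 (nat \<lceil>2 powr (1/\<alpha>)\<rceil>) + 1"
    show "\<exists>N0 :: nat. \<forall>N :: nat. N \<ge> N0 \<and> gcd N (fact kp) = 1 \<longrightarrow>
              (\<exists>S :: int set. S \<subseteq> {0..<int N} \<and>
                 (1/2) * real N powr (1 / real t - \<epsilon>) \<le> real (card S) \<and>
                 real (card S) \<le> (3/2) * real N powr (1 / real t - \<epsilon>) \<and>
                 lambda_packing N (2^(t*(L-1))) (punct_interval (- int km) (int kp)) t S)"
    proof (rule exI[of _ N1], intro allI impI)
      fix N :: nat assume NN: "N \<ge> N1 \<and> gcd N (fact kp) = 1"
      then have NN0: "N \<ge> N0" and N1': "real N > 2 powr (1/\<alpha>)" unfolding N1_def by linarith+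
      have Npos: "N > 0" using NN unfolding N1_def by simp
      have Nr: "real N \<ge> 1" using Npos by simp
      define a where "a = real N powr \<alpha>"
      have a2: "a > 2"
      proof -
        have "(2 powr (1/\<alpha>)) powr \<alpha> < real N powr \<alpha>" by (rule powr_less_mono2[OF \<alpha>0 _ N1']) simp
        then show ?thesis unfolding a_def using \<alpha>0 by (simp add: powr_powr)
      qed
      have aN: "a \<le> real N"
      proof -
        have "real N powr \<alpha> \<le> real N powr 1" by (rule powr_mono[OF \<alpha>1 Nr])
        then show ?thesis unfolding a_def by simp
      qed
      define n where "n = nat \<lceil>a\<rceil>"
      have na: "real n \<ge> a" "real n < a + 1" unfolding n_def using a2 by linarith+
      have n1: "real n \<ge> 1" using na a2 by linarith
      have nN: "n \<le> N" unfolding n_def using aN by (simp add: ceiling_le_iff nat_le_iff)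
      define x where "x = real n / real N"
      have x0: "x \<ge> 0" unfolding x_def by simp
      define y where "y = real n ^ t / real N"
      have y0: "y \<ge> 0" unfolding y_def by simp
      have yb: "y \<le> 2^t * real N powr (- (real t * \<epsilon>))"
        unfolding y_def n_def a_def by (rule n_bound[OF assms(1) _ \<alpha>_def \<alpha>0]) (use Npos in simp)
      have main: "real N * (C1 * y)^L + C2 * y < 1" using N0 NN0 y0 yb by blast
      define I1 where "I1 = (SIGMA g:{0..<int N}. Ch N V t g L)"
      define I2 where "I2 = PP N V t"
      have finI1: "finite I1" unfolding I1_def using Ch_fin[OF finV] by auto
      have finI2: "finite I2" unfolding I2_def PP_def
        by (rule finite_subset[of _ "FF N V t \<times> FF N V t"]) (use FF_fin[OF finV] in auto)
      have W1: "\<forall>i\<in>I1. WU (snd i) \<subseteq> {0..<int N}" unfolding I1_def Ch_def using WU_card by fastforce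
      have W2: "\<forall>i\<in>I2. sp (fst i) \<subseteq> {0..<int N}" unfolding I2_def PP_def using sp_sub by fastforce
      define Bc where "Bc = real (2*kp+2) * real (card V) * x * real (card V) ^ (Suc t' * L) * (1 + real N * real (card V) * x) ^ t'"
      have Bc0: "Bc \<ge> 0" unfolding Bc_def using x0 by simp
      have BcC: "Bc \<le> C1 * y"
      proof -
        have "Bc \<le> (real (2*kp+2) * cV^(Suc t' * L+1) * (2*cV)^t') * (real n^(Suc t')/real N)"
          unfolding Bc_def x_def cV_def[symmetric] by (rule alg_bound[OF n1 _ cV1]) (use Npos in auto)
        then show ?thesis unfolding C1_def y_def t' .
      qed
      have s1: "(\<Sum>i\<in>I1. x ^ card (WU (snd i))) \<le> real N * (C1 * y)^L"
      proof -
        have "(\<Sum>i\<in>I1. x ^ card (WU (snd i))) = (\<Sum>g\<in>{0..<int N}. \<Sum>es\<in>Ch N V t g L. x ^ card (WU es))"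
        proof -
          have "(\<Sum>g\<in>{0..<int N}. \<Sum>es\<in>Ch N V t g L. x ^ card (WU es))
             = (\<Sum>i\<in>I1. (\<lambda>(g, es). x ^ card (WU es)) i)"
            unfolding I1_def by (rule sum.Sigma) (auto simp: Ch_fin[OF finV])
          then show ?thesis by (simp add: split_def)
        qed
        also have "\<dots> \<le> (\<Sum>g\<in>{0..<int N}. Bc ^ L)"
        proof (rule sum_mono)
          fix g assume "g \<in> {0..<int N}"
          show "(\<Sum>es\<in>Ch N V t g L. x ^ card (WU es)) \<le> Bc ^ L"
            unfolding t' Bc_def by (rule chain_bound[OF finV V0 Vb x0 Npos]) simp
        qed
        also have "\<dots> = real N * Bc ^ L" by simp
        also have "\<dots> \<le> real N * (C1 * y)^L" by (intro mult_left_mono power_mono BcC Bc0) simp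
        finally show ?thesis .
      qed
      have s2: "(\<Sum>i\<in>I2. x ^ card (sp (fst i))) \<le> C2 * y"
      proof -
        have "(\<Sum>i\<in>I2. x ^ card (sp (fst i))) \<le> real (4*kp+2) * real (card V) ^ t' * real (card V) ^ 2 * x * (\<Sum>e\<in>FF N V t'. x ^ card (sp e))"
          unfolding I2_def t' by (rule pair_bound[OF finV V0 Vb x0 Npos])
        also have "\<dots> \<le> real (4*kp+2) * real (card V) ^ t' * real (card V) ^ 2 * x * (real (card V) ^ card ({}::int set) * (1 + real N * real (card V) * x) ^ t')"
        proof (rule mult_left_mono)
          show "(\<Sum>e\<in>FF N V t'. x ^ card (sp e)) \<le> real (card V) ^ card ({}::int set) * (1 + real N * real (card V) * x) ^ t'"
            using phi_bound[OF finV V0 x0, of "{}" N t'] by simp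
        qed (use x0 in simp)
        also have "\<dots> = real (4*kp+2) * cV * x * cV^(t'+1) * (1 + real N * cV * x)^t'"
          unfolding cV_def by (simp add: algebra_simps power2_eq_square)
        also have "\<dots> \<le> (real (4*kp+2) * cV^(t'+1+1) * (2*cV)^t') * (real n^(Suc t')/real N)"
          unfolding x_def by (rule alg_bound[OF n1 _ cV1]) (use Npos in auto)
        finally show ?thesis unfolding C2_def y_def t' .
      qed
      have sm: "(\<Sum>i\<in>I1. (real n / real N) ^ card (WU (snd i))) + (\<Sum>i\<in>I2. (real n / real N) ^ card (sp (fst i))) < 1"
        using s1 s2 main unfolding x_def by linarith
      obtain S where S: "S \<subseteq> {0..<int N}" "card S = n" "\<forall>i\<in>I1. \<not> WU (snd i) \<subseteq> S" "\<forall>i\<in>I2. \<not> sp (fst i) \<subseteq> S"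
        using exists_good[OF finI1 finI2 W1 W2 nN Npos sm] by blast
      have noch: "\<forall>g\<in>{0..<int N}. \<forall>es\<in>Ch N V t g L. \<not> WU es \<subseteq> S"
        using S(3) unfolding I1_def by auto
      have nopair: "\<forall>p\<in>PP N V t. \<not> sp (fst p) \<subseteq> S" using S(4) unfolding I2_def by auto
      have pack: "lambda_packing N (2^(t*(L-1))) M t S"
        by (rule good_packing[OF VM finM S(1) L1 noch nopair])
      show "\<exists>S :: int set. S \<subseteq> {0..<int N} \<and>
                 (1/2) * real N powr (1 / real t - \<epsilon>) \<le> real (card S) \<and>
                 real (card S) \<le> (3/2) * real N powr (1 / real t - \<epsilon>) \<and>
                 lambda_packing N (2^(t*(L-1))) (punct_interval (- int km) (int kp)) t S"
      proof (rule exI[of _ S], intro conjI)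
        show "S \<subseteq> {0..<int N}" by (rule S(1))
        show "(1/2) * real N powr (1 / real t - \<epsilon>) \<le> real (card S)"
          using S(2) na a2 unfolding a_def \<alpha>_def by linarith
        show "real (card S) \<le> (3/2) * real N powr (1 / real t - \<epsilon>)"
          using S(2) na a2 unfolding a_def \<alpha>_def by linarith
        show "lambda_packing N (2^(t*(L-1))) (punct_interval (- int km) (int kp)) t S"
          using pack unfolding M_def .
      qed
    qed
  qed
qed

end
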